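(* Let $n\ge 1$ and $1\le p\le n$. The number $F(n;p)$ of $\alpha\in\mathcal{ORCT}_n$ with $h(\alpha)=p$ equals $2(n-p+1)\binom{n-1}{p-1}$ if $p>1$, and equals $n$ if $p=1$.
   Context: $X_n=\{1,2,\dots,n\}$ with its usual order; maps are written on the right ($x\alpha$). A map $\alpha:X_n\to X_n$ is order-preserving if $x\le y$ implies $x\alpha\le y\alpha$, order-reversing if $x\le y$ implies $x\alpha\ge y\alpha$, and a contraction if $|x\alpha-y\alpha|\le|x-y|$ for all $x,y$. $\mathcal{ORCT}_n$ is the set of all maps $X_n\to X_n$ (defined on all of $X_n$) that are contractions and are either order-preserving or order-reversing. Height $h(\alpha)=|\mathrm{Im}\,\alpha|$. *)

theory Defs
  imports Main "HOL-Library.FuncSet"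
begin

text \<open>Full transformations of X_n = {1..n}, represented as extensional functions
  (value undefined outside {1..n}), so each map corresponds to exactly one HOL function.\<close>

definition order_preserving :: "nat \<Rightarrow> (nat \<Rightarrow> nat) \<Rightarrow> bool" where
  "order_preserving n f \<longleftrightarrow> (\<forall>x\<in>{1..n}. \<forall>y\<in>{1..n}. x \<le> y \<longrightarrow> f x \<le> f y)"

definition order_reversing :: "nat \<Rightarrow> (nat \<Rightarrow> nat) \<Rightarrow> bool" where
  "order_reversing n f \<longleftrightarrow> (\<forall>x\<in>{1..n}. \<forall>y\<in>{1..n}. x \<le> y \<longrightarrow> f x \<ge> f y)"

definition contraction :: "nat \<Rightarrow> (nat \<Rightarrow> nat) \<Rightarrow> bool" where
  "contraction n f \<longleftrightarrow>
     (\<forall>x\<in>{1..n}. \<forall>y\<in>{1..n}. \<bar>int (f x) - int (f y)\<bar> \<le> \<bar>int x - int y\<bar>)"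

definition ORCT :: "nat \<Rightarrow> (nat \<Rightarrow> nat) set" where
  "ORCT n = {f \<in> {1..n} \<rightarrow>\<^sub>E {1..n}.
              contraction n f \<and> (order_preserving n f \<or> order_reversing n f)}"

definition height :: "nat \<Rightarrow> (nat \<Rightarrow> nat) \<Rightarrow> nat" where
  "height n f = card (f ` {1..n})"

definition F :: "nat \<Rightarrow> nat \<Rightarrow> nat" where
  "F n p = card {f \<in> ORCT n. height n f = p}"

end

theory Submission
  imports Defs
begin

definition stp :: "nat \<Rightarrow> (nat \<Rightarrow> nat) \<Rightarrow> bool" where
  "stp n f \<longleftrightarrow> (\<forall>i. 1 \<le> i \<longrightarrow> i < n \<longrightarrow> f (Suc i) = f i \<or> f (Suc i) = Suc (f i))"

lemma stp_mono:
  assumes "stp n f" "1 \<le> x" "x \<le> y" "y \<le> n"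
  shows "f x \<le> f y \<and> f y \<le> f x + (y - x)"
  using assms(3,4)
proof (induction y rule: dec_induct)
  case base then show ?case by simp
next
  case (step m)
  have "f (Suc m) = f m \<or> f (Suc m) = Suc (f m)"
    using assms(1,2) step by (simp add: stp_def)
  then show ?case using step by auto
qed

lemma stp_imp:
  assumes "stp n f"
  shows "contraction n f \<and> order_preserving n f"
proof -
  have "order_preserving n f" unfolding order_preserving_def
    using stp_mono[OF assms] by auto
  moreover have "contraction n f" unfolding contraction_def
  proof (intro ballI)
    fix x y assume xy: "x \<in> {1..n}" "y \<in> {1..n}"
    show "\<bar>int (f x) - int (f y)\<bar> \<le> \<bar>int x - int y\<bar>"
    proof (cases "x \<le> y")
      case True
      then show ?thesis using stp_mono[OF assms, of x y] xy by auto
    next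
      case False
      then show ?thesis using stp_mono[OF assms, of y x] xy by auto
    qed
  qed
  ultimately show ?thesis by simp
qed

lemma imp_stp:
  assumes "contraction n f" "order_preserving n f"
  shows "stp n f"
  unfolding stp_def
proof (intro allI impI)
  fix i assume i: "1 \<le> i" "i < n"
  have "f i \<le> f (Suc i)" using assms(2) i unfolding order_preserving_def by auto
  moreover have "\<bar>int (f (Suc i)) - int (f i)\<bar> \<le> \<bar>int (Suc i) - int i\<bar>"
  proof -
    have "Suc i \<in> {1..n}" "i \<in> {1..n}" using i by auto
    then show ?thesis using assms(1) unfolding contraction_def by blast
  qed
  ultimately show "f (Suc i) = f i \<or> f (Suc i) = Suc (f i)" by auto
qed

lemma stp_image:
  assumes "stp n f" "1 \<le> m" "m \<le> n"
  shows "f ` {1..m} = {f 1..f m}"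
  using assms(2,3)
proof (induction m rule: dec_induct)
  case base then show ?case by simp
next
  case (step m)
  have e: "f (Suc m) = f m \<or> f (Suc m) = Suc (f m)"
    using assms(1) step by (simp add: stp_def)
  have le: "f 1 \<le> f m" using stp_mono[OF assms(1), of 1 m] step by auto
  have "{1..Suc m} = insert (Suc m) {1..m}" using step by auto
  then have "f ` {1..Suc m} = insert (f (Suc m)) {f 1..f m}" using step by auto
  also have "\<dots> = {f 1..f (Suc m)}" using e le by auto
  finally show ?case .
qed

definition OPC :: "nat \<Rightarrow> nat \<Rightarrow> (nat \<Rightarrow> nat) set" where
  "OPC n p = {f \<in> {1..n} \<rightarrow>\<^sub>E {1..n}. contraction n f \<and> order_preserving n f \<and> height n f = p}"

definition ORC :: "nat \<Rightarrow> nat \<Rightarrow> (nat \<Rightarrow> nat) set" where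
  "ORC n p = {f \<in> {1..n} \<rightarrow>\<^sub>E {1..n}. contraction n f \<and> order_reversing n f \<and> height n f = p}"

definition phi :: "nat \<Rightarrow> nat \<Rightarrow> nat set \<Rightarrow> nat \<Rightarrow> nat" where
  "phi n a S = (\<lambda>x. if x \<in> {1..n} then a + card {j\<in>S. j < x} else undefined)"

definition DD :: "nat \<Rightarrow> nat \<Rightarrow> (nat \<times> nat set) set" where
  "DD n p = {1..n-p+1} \<times> {S. S \<subseteq> {1..<n} \<and> card S = p - 1}"

lemma card_lt_Suc:
  assumes "finite S"
  shows "card {j\<in>S. j < Suc i} = card {j\<in>S. j < i} + (if i \<in> S then 1 else 0)"
proof (cases "i \<in> S")
  case True
  have "{j\<in>S. j < Suc i} = insert i {j\<in>S. j < i}" using True by auto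
  then show ?thesis using True assms by simp
next
  case False
  have "{j\<in>S. j < Suc i} = {j\<in>S. j < i}" using False less_Suc_eq by auto
  then show ?thesis using False by simp
qed

lemma phi_stp:
  assumes "S \<subseteq> {1..<n}"
  shows "stp n (phi n a S)"
proof -
  have fin: "finite S" using assms finite_subset by blast
  show ?thesis unfolding stp_def phi_def using card_lt_Suc[OF fin] by auto
qed

lemma phi_1: "1 \<le> n \<Longrightarrow> S \<subseteq> {1..<n} \<Longrightarrow> phi n a S 1 = a"
proof -
  assume "1 \<le> n" "S \<subseteq> {1..<n}"
  then have "{j\<in>S. j < 1} = {}" by auto
  then show ?thesis using \<open>1 \<le> n\<close> unfolding phi_def by simp
qed

lemma phi_n: "1 \<le> n \<Longrightarrow> S \<subseteq> {1..<n} \<Longrightarrow> phi n a S n = a + card S"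
proof -
  assume "1 \<le> n" "S \<subseteq> {1..<n}"
  then have "{j\<in>S. j < n} = S" by auto
  then show ?thesis using \<open>1 \<le> n\<close> unfolding phi_def by simp
qed

lemma OPC_eq:
  assumes "1 \<le> n" "1 \<le> p" "p \<le> n"
  shows "OPC n p = (\<lambda>(a,S). phi n a S) ` DD n p"
proof
  show "(\<lambda>(a,S). phi n a S) ` DD n p \<subseteq> OPC n p"
  proof clarify
    fix a S assume "(a,S) \<in> DD n p"
    then have a: "1 \<le> a" "a \<le> n - p + 1" and S: "S \<subseteq> {1..<n}" "card S = p - 1"
      unfolding DD_def by auto
    have fin: "finite S" using S finite_subset by blast
    have st: "stp n (phi n a S)" using phi_stp[OF S(1)] .
    have "phi n a S \<in> {1..n} \<rightarrow>\<^sub>E {1..n}"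
    proof
      fix x assume x: "x \<in> {1..n}"
      have "card {j\<in>S. j < x} \<le> card S" using fin by (intro card_mono) auto
      then show "phi n a S x \<in> {1..n}" using x a S assms unfolding phi_def by auto
    next
      fix x assume "x \<notin> {1..n}" then show "phi n a S x = undefined" unfolding phi_def by (rule if_not_P)
    qed
    moreover have "height n (phi n a S) = p"
      unfolding height_def using stp_image[OF st assms(1) order_refl] phi_1[OF assms(1) S(1)]
        phi_n[OF assms(1) S(1)] S assms by simp
    ultimately show "phi n a S \<in> OPC n p" unfolding OPC_def using stp_imp[OF st] by simp
  qed
next
  show "OPC n p \<subseteq> (\<lambda>(a,S). phi n a S) ` DD n p"
  proof
    fix f assume f: "f \<in> OPC n p"
    then have st: "stp n f" and fP: "f \<in> {1..n} \<rightarrow>\<^sub>E {1..n}" and h: "height n f = p"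
      using imp_stp unfolding OPC_def by auto
    define S where "S = {i\<in>{1..<n}. f (Suc i) = Suc (f i)}"
    have S1: "S \<subseteq> {1..<n}" unfolding S_def by auto
    have fin: "finite S" unfolding S_def by auto
    have val0: "x \<le> n \<longrightarrow> f x = f 1 + card {j\<in>S. j < x}" if x: "1 \<le> x" for x
      using x
    proof (induction x rule: dec_induct)
      case base
      have "{j\<in>S. j < 1} = {}" using S1 by auto
      then show ?case by simp
    next
      case (step m)
      show ?case
      proof
        assume mn: "Suc m \<le> n"
        have IH: "f m = f 1 + card {j\<in>S. j < m}" using step mn by simp
        have e: "f (Suc m) = f m \<or> f (Suc m) = Suc (f m)"
          using st step(1) mn unfolding stp_def by simp
        have mS: "m \<in> S \<longleftrightarrow> f (Suc m) = Suc (f m)" using step(1) mn unfolding S_def by simp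
        have c: "card {j\<in>S. j < Suc m} = card {j\<in>S. j < m} + (if m \<in> S then 1 else 0)"
          using card_lt_Suc[OF fin, of m] .
        show "f (Suc m) = f 1 + card {j\<in>S. j < Suc m}"
        proof (cases "m \<in> S")
          case True
          then show ?thesis using c mS IH by simp
        next
          case False
          then show ?thesis using c mS IH e by simp
        qed
      qed
    qed
    have val: "f x = f 1 + card {j\<in>S. j < x}" if "1 \<le> x" "x \<le> n" for x
      using val0 that by blast
    have feq: "f = phi n (f 1) S"
    proof
      fix x show "f x = phi n (f 1) S x"
      proof (cases "x \<in> {1..n}")
        case True
        have v: "f x = f 1 + card {j\<in>S. j < x}" using True by (intro val) auto
        show ?thesis unfolding phi_def by (subst if_P[OF True]) (rule v)
      next
        case False then show ?thesis unfolding phi_def by (subst if_not_P[OF False]) (rule PiE_arb[OF fP False])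
      qed
    qed
    have "f n = phi n (f 1) S n" by (rule fun_cong[OF feq])
    then have fn: "f n = f 1 + card S" using phi_n[OF assms(1) S1, of "f 1"] by simp
    have "card (f ` {1..n}) = p" using h unfolding height_def .
    moreover have "f ` {1..n} = {f 1..f n}" using stp_image[OF st assms(1) order_refl] .
    ultimately have "p = card S + 1" using fn by simp
    moreover have "f n \<le> n" "1 \<le> f 1" using fP assms by auto
    ultimately have "card S = p - 1" "f 1 \<le> n - p + 1" "1 \<le> f 1" using fn by linarith+
    then have "(f 1, S) \<in> DD n p" unfolding DD_def using S1 by auto
    then have "phi n (f 1) S \<in> (\<lambda>(a,S). phi n a S) ` DD n p" by force
    then show "f \<in> (\<lambda>(a,S). phi n a S) ` DD n p" using feq by metis
  qed
qed

lemma phi_inj: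
  assumes "1 \<le> n"
  shows "inj_on (\<lambda>(a,S). phi n a S) (DD n p)"
proof (rule inj_onI, clarify)
  fix a S b T assume A: "(a,S) \<in> DD n p" "(b,T) \<in> DD n p" and eq: "phi n a S = phi n b T"
  have S: "S \<subseteq> {1..<n}" "T \<subseteq> {1..<n}" using A unfolding DD_def by auto
  have finS: "finite S" "finite T" using S finite_subset by auto
  have ab: "a = b" using phi_1[OF assms S(1), of a] phi_1[OF assms S(2), of b] eq by metis
  have "i \<in> S \<longleftrightarrow> i \<in> T" for i
  proof (cases "i \<in> {1..<n}")
    case True
    have "phi n a S (Suc i) = phi n b T (Suc i)" "phi n a S i = phi n b T i" using eq by auto
    then show ?thesis using True card_lt_Suc[OF finS(1), of i] card_lt_Suc[OF finS(2), of i]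
      unfolding phi_def by (auto split: if_splits)
  next
    case False then show ?thesis using S by auto
  qed
  then show "a = b \<and> S = T" using ab by auto
qed

lemma card_OPC:
  assumes "1 \<le> n" "1 \<le> p" "p \<le> n"
  shows "card (OPC n p) = (n - p + 1) * (n - 1 choose (p - 1))"
proof -
  have "card (OPC n p) = card (DD n p)"
    using OPC_eq[OF assms] card_image[OF phi_inj[OF assms(1)]] by simp
  also have "\<dots> = (n - p + 1) * (n - 1 choose (p - 1))"
    unfolding DD_def using n_subsets[of "{1..<n}" "p - 1"] by (simp add: card_cartesian_product)
  finally show ?thesis .
qed

definition rho :: "nat \<Rightarrow> (nat \<Rightarrow> nat) \<Rightarrow> nat \<Rightarrow> nat" where
  "rho n f = (\<lambda>x. if x \<in> {1..n} then Suc n - f x else undefined)"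

lemma rho_app: "x \<in> {1..n} \<Longrightarrow> rho n f x = Suc n - f x"
  unfolding rho_def by simp

lemma rho_facts:
  assumes fP: "f \<in> {1..n} \<rightarrow>\<^sub>E {1..n}"
  shows "rho n f \<in> {1..n} \<rightarrow>\<^sub>E {1..n}"
    and "rho n (rho n f) = f"
    and "contraction n (rho n f) \<longleftrightarrow> contraction n f"
    and "order_preserving n (rho n f) \<longleftrightarrow> order_reversing n f"
    and "order_reversing n (rho n f) \<longleftrightarrow> order_preserving n f"
    and "height n (rho n f) = height n f"
proof -
  have b: "1 \<le> f x \<and> f x \<le> n" if "x \<in> {1..n}" for x using fP that by auto
  show "rho n f \<in> {1..n} \<rightarrow>\<^sub>E {1..n}"
  proof
    fix x assume x: "x \<in> {1..n}"
    then show "rho n f x \<in> {1..n}" using b[OF x] rho_app[OF x] by auto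
  next
    fix x assume "x \<notin> {1..n}" then show "rho n f x = undefined" unfolding rho_def by (rule if_not_P)
  qed
  show "rho n (rho n f) = f"
  proof
    fix x show "rho n (rho n f) x = f x"
    proof (cases "x \<in> {1..n}")
      case True then show ?thesis using b[OF True] rho_app[OF True, of f] rho_app[OF True, of "rho n f"] by simp
    next
      case False
      have "rho n (rho n f) x = undefined" unfolding rho_def by (rule if_not_P[OF False])
      then show ?thesis using PiE_arb[OF fP False] by simp
    qed
  qed
  have i: "int (rho n f x) = int n + 1 - int (f x)" if "x \<in> {1..n}" for x
    using b[OF that] rho_app[OF that, of f] by simp
  show "contraction n (rho n f) \<longleftrightarrow> contraction n f"
    unfolding contraction_def using i by (simp add: abs_minus_commute)
  show "order_preserving n (rho n f) \<longleftrightarrow> order_reversing n f"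
    unfolding order_preserving_def order_reversing_def
  proof (intro iffI ballI impI)
    fix x y assume H: "\<forall>x\<in>{1..n}. \<forall>y\<in>{1..n}. x \<le> y \<longrightarrow> rho n f x \<le> rho n f y"
      and xy: "x \<in> {1..n}" "y \<in> {1..n}" "x \<le> y"
    then have "rho n f x \<le> rho n f y" by blast
    then show "f y \<le> f x" using i[OF xy(1)] i[OF xy(2)] by linarith
  next
    fix x y assume H: "\<forall>x\<in>{1..n}. \<forall>y\<in>{1..n}. x \<le> y \<longrightarrow> f y \<le> f x"
      and xy: "x \<in> {1..n}" "y \<in> {1..n}" "x \<le> y"
    then have "f y \<le> f x" by blast
    then show "rho n f x \<le> rho n f y" using i[OF xy(1)] i[OF xy(2)] by linarith
  qed
  show "order_reversing n (rho n f) \<longleftrightarrow> order_preserving n f"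
    unfolding order_preserving_def order_reversing_def
  proof (intro iffI ballI impI)
    fix x y assume H: "\<forall>x\<in>{1..n}. \<forall>y\<in>{1..n}. x \<le> y \<longrightarrow> rho n f y \<le> rho n f x"
      and xy: "x \<in> {1..n}" "y \<in> {1..n}" "x \<le> y"
    then have "rho n f y \<le> rho n f x" by blast
    then show "f x \<le> f y" using i[OF xy(1)] i[OF xy(2)] by linarith
  next
    fix x y assume H: "\<forall>x\<in>{1..n}. \<forall>y\<in>{1..n}. x \<le> y \<longrightarrow> f x \<le> f y"
      and xy: "x \<in> {1..n}" "y \<in> {1..n}" "x \<le> y"
    then have "f x \<le> f y" by blast
    then show "rho n f y \<le> rho n f x" using i[OF xy(1)] i[OF xy(2)] by linarith
  qed
  have im: "rho n f ` {1..n} = (\<lambda>v. Suc n - v) ` (f ` {1..n})"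
    unfolding image_image using rho_app by (intro image_cong) auto
  have inj: "inj_on (\<lambda>v. Suc n - v) {1..n}" by (rule inj_onI) auto
  have sub: "f ` {1..n} \<subseteq> {1..n}" using fP by auto
  show "height n (rho n f) = height n f"
    unfolding height_def im using card_image[OF inj_on_subset[OF inj sub]] .
qed

lemma ORC_eq: "ORC n p = rho n ` OPC n p"
proof
  show "rho n ` OPC n p \<subseteq> ORC n p"
  proof
    fix g assume "g \<in> rho n ` OPC n p"
    then obtain f where f: "f \<in> OPC n p" "g = rho n f" by blast
    then have fP: "f \<in> {1..n} \<rightarrow>\<^sub>E {1..n}" "contraction n f" "order_preserving n f" "height n f = p"
      unfolding OPC_def by auto
    show "g \<in> ORC n p" unfolding ORC_def f(2) using rho_facts[OF fP(1)] fP(2-4) by blast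
  qed
  show "ORC n p \<subseteq> rho n ` OPC n p"
  proof
    fix g assume g: "g \<in> ORC n p"
    then have gP: "g \<in> {1..n} \<rightarrow>\<^sub>E {1..n}" unfolding ORC_def by auto
    have gg: "contraction n g" "order_reversing n g" "height n g = p" using g unfolding ORC_def by auto
    have "rho n g \<in> OPC n p" using gg rho_facts[OF gP] unfolding OPC_def by blast
    moreover have "g = rho n (rho n g)" using rho_facts(2)[OF gP] by simp
    ultimately show "g \<in> rho n ` OPC n p" by blast
  qed
qed

lemma rho_inj: "inj_on (rho n) (OPC n p)"
proof (rule inj_on_inverseI[where g="rho n"])
  fix f assume "f \<in> OPC n p"
  then have "f \<in> {1..n} \<rightarrow>\<^sub>E {1..n}" unfolding OPC_def by blast
  then show "rho n (rho n f) = f" by (rule rho_facts(2))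
qed

lemma finite_OPC: "finite (OPC n p)"
  by (rule finite_subset[of _ "{1..n} \<rightarrow>\<^sub>E {1..n}"]) (auto simp: OPC_def intro: finite_PiE)

lemma card_ORC: "card (ORC n p) = card (OPC n p)"
  unfolding ORC_eq using card_image[OF rho_inj] .

lemma split_eq: "{f \<in> ORCT n. height n f = p} = OPC n p \<union> ORC n p"
  unfolding ORCT_def OPC_def ORC_def by auto

lemma const_of_both:
  assumes "1 \<le> n" "order_preserving n f" "order_reversing n f"
  shows "height n f = 1"
proof -
  have eq: "f x = f 1" if "x \<in> {1..n}" for x
  proof -
    have "1 \<in> {1..n}" using assms by auto
    then have "f 1 \<le> f x" "f x \<le> f 1" using assms(2,3) that
      unfolding order_preserving_def order_reversing_def by auto
    then show ?thesis by simp
  qed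
  have "f ` {1..n} \<subseteq> {f 1}" using eq by blast
  moreover have "f 1 \<in> f ` {1..n}" using assms(1) by auto
  ultimately have "f ` {1..n} = {f 1}" by blast
  then show ?thesis unfolding height_def by simp
qed

lemma height1_op:
  assumes "height n f = 1"
  shows "order_preserving n f"
proof -
  have "card (f ` {1..n}) = 1" using assms unfolding height_def .
  then obtain c where c: "f ` {1..n} = {c}" by (rule card_1_singletonE)
  then have "f x = c" if "x \<in> {1..n}" for x using that by auto
  then show ?thesis unfolding order_preserving_def by auto
qed

theorem corollary3p4:
  fixes n p :: nat
  assumes "1 \<le> n" and "1 \<le> p" and "p \<le> n"
  shows "F n p = (if p > 1 then 2 * (n - p + 1) * (n - 1 choose (p - 1)) else n)"
proof (cases "p > 1")
  case True
  have disj: "OPC n p \<inter> ORC n p = {}"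
  proof (rule ccontr)
    assume "OPC n p \<inter> ORC n p \<noteq> {}"
    then obtain f where "f \<in> OPC n p" "f \<in> ORC n p" by blast
    then have "order_preserving n f" "order_reversing n f" "height n f = p"
      unfolding OPC_def ORC_def by auto
    then show False using const_of_both[OF assms(1)] True by auto
  qed
  have fin2: "finite (ORC n p)" unfolding ORC_eq using finite_OPC by simp
  have "F n p = card (OPC n p) + card (ORC n p)"
    unfolding F_def split_eq using card_Un_disjoint[OF finite_OPC fin2 disj] .
  also have "\<dots> = 2 * (n - p + 1) * (n - 1 choose (p - 1))"
    using card_ORC card_OPC[OF assms] by simp
  finally show ?thesis using True by simp
next
  case False
  then have p1: "p = 1" using assms by simp
  have "ORC n p \<subseteq> OPC n p"
    unfolding OPC_def ORC_def using height1_op p1 by auto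
  then have "{f \<in> ORCT n. height n f = p} = OPC n p" unfolding split_eq by auto
  then have "F n p = card (OPC n p)" unfolding F_def by simp
  also have "\<dots> = n" using card_OPC[OF assms] p1 assms(1) by simp
  finally show ?thesis using False by simp
qed

end
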